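(* Let $\{|\mu_0\rangle,|\mu_1\rangle\}$ and $\{|\nu_0\rangle,|\nu_1\rangle\}$ be orthonormal bases of $\mathbb{C}^2$, $N$ the projective measurement $\{|\nu_0\rangle\langle\nu_0|,|\nu_1\rangle\langle\nu_1|\}$, and $c=\max_{x,y}|\langle\mu_x|\nu_y\rangle|^2$. Let $a\in\{0,1\}$, $w\in[0,1]$, $\delta>0$, and let $J\subseteq\{i\in\{0,1\}^n: w_a(i)\le w+\delta\}$. Let $\mathcal{H}_C$ be any finite-dimensional Hilbert space and let $$|\phi'\rangle=\sum_{i\in J}\alpha_i\,|\mu_{i_1}\rangle\otimes\cdots\otimes|\mu_{i_n}\rangle\otimes|C_i\rangle\in(\mathbb{C}^2)^{\otimes n}\otimes\mathcal{H}_C$$ be a unit vector, where $|C_i\rangle\in\mathcal{H}_C$ are arbitrary unit vectors (not necessarily orthogonal). Then the reduced state $\sigma=\mathrm{tr}_C|\phi'\rangle\langle\phi'|$ on the $n$ qubits satisfies $$H_\infty(N)_\sigma\ \ge\ -n\log_2 c-n\,\bar H(w+\delta).$$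
   Context: $w_a(i)=|\{l: i_l\ne a\}|/n$ is the relative $a$-Hamming weight. $\bar H(x)=-x\log_2x-(1-x)\log_2(1-x)$ for $x\in[0,1/2]$, $\bar H(x)=0$ for $x<0$, $\bar H(x)=1$ for $x>1/2$. For a state $\sigma$ on $(\mathbb{C}^2)^{\otimes n}$, $H_\infty(N)_\sigma=-\log_2\max_{j\in\{0,1\}^n}\langle\nu_{j_1}\cdots\nu_{j_n}|\sigma|\nu_{j_1}\cdots\nu_{j_n}\rangle$. *)

theory Defs
  imports Complex_Main
begin

text \<open>Qubit vectors: elements of C^2 represented as functions bool => complex
  (index False ~ 0, True ~ 1). Computational strings i in {0,1}^n are bool lists
  of length n.\<close>

type_synonym qubit = "bool \<Rightarrow> complex"

definition qinner :: "qubit \<Rightarrow> qubit \<Rightarrow> complex" where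
  "qinner u v = (\<Sum>b\<in>UNIV. cnj (u b) * v b)"

definition orthonormal_basis2 :: "(bool \<Rightarrow> qubit) \<Rightarrow> bool" where
  "orthonormal_basis2 e \<longleftrightarrow> (\<forall>x y. qinner (e x) (e y) = (if x = y then 1 else 0))"

definition strings :: "nat \<Rightarrow> bool list set" where
  "strings n = {xs. length xs = n}"

definition hamming_weight_rel :: "bool \<Rightarrow> bool list \<Rightarrow> real" where
  "hamming_weight_rel a i = real (card {l. l < length i \<and> i ! l \<noteq> a}) / real (length i)"

definition Hbar :: "real \<Rightarrow> real" where
  "Hbar x = (if x < 0 then 0 else if x > 1/2 then 1
             else - x * log 2 x - (1 - x) * log 2 (1 - x))"

text \<open>Product vector |v_{j_1}> (x) ... (x) |v_{j_n}> in (C^2)^{(x) n}, with components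
  indexed by strings x of length n.\<close>
definition prodvec :: "(bool \<Rightarrow> qubit) \<Rightarrow> bool list \<Rightarrow> bool list \<Rightarrow> complex" where
  "prodvec e j x = (\<Prod>l<length j. e (j ! l) (x ! l))"

text \<open>The state |phi'> = sum_{i in J} alpha_i |mu_i> (x) |C_i> in (C^2)^{(x) n} (x) H_C,
  with H_C = C^'c for a finite type 'c, components indexed by (x, k).\<close>
definition phi_state :: "(bool \<Rightarrow> qubit) \<Rightarrow> bool list set \<Rightarrow> (bool list \<Rightarrow> complex)
     \<Rightarrow> (bool list \<Rightarrow> 'c::finite \<Rightarrow> complex) \<Rightarrow> bool list \<Rightarrow> 'c \<Rightarrow> complex" where
  "phi_state mu J alpha C x k = (\<Sum>i\<in>J. alpha i * prodvec mu i x * C i k)"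

definition ptrace_C :: "(bool list \<Rightarrow> 'c::finite \<Rightarrow> complex) \<Rightarrow> bool list \<Rightarrow> bool list \<Rightarrow> complex" where
  "ptrace_C phi x y = (\<Sum>k\<in>UNIV. phi x k * cnj (phi y k))"

definition expval :: "nat \<Rightarrow> (bool list \<Rightarrow> bool list \<Rightarrow> complex) \<Rightarrow> (bool list \<Rightarrow> complex) \<Rightarrow> complex" where
  "expval n sigma v = (\<Sum>x\<in>strings n. \<Sum>y\<in>strings n. cnj (v x) * sigma x y * v y)"

definition Hmin_meas :: "nat \<Rightarrow> (bool \<Rightarrow> qubit) \<Rightarrow> (bool list \<Rightarrow> bool list \<Rightarrow> complex) \<Rightarrow> real" where
  "Hmin_meas n nu sigma = - log 2 (Max ((\<lambda>j. Re (expval n sigma (prodvec nu j))) ` strings n))"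

definition overlap_c :: "(bool \<Rightarrow> qubit) \<Rightarrow> (bool \<Rightarrow> qubit) \<Rightarrow> real" where
  "overlap_c mu nu = Max {(cmod (qinner (mu x) (nu y)))\<^sup>2 | x y. True}"

end

theory Submission
  imports Defs "HOL-Analysis.Analysis"
begin


lemma finite_strings[simp]: "finite (strings n)"
proof -
  have "strings n = {xs. set xs \<subseteq> (UNIV::bool set) \<and> length xs = n}" by (auto simp: strings_def)
  thus ?thesis using finite_lists_length_eq[of "UNIV::bool set" n] by simp
qed

lemma card_strings: "card (strings n) = 2 ^ n"
proof -
  have "strings n = {xs. set xs \<subseteq> (UNIV::bool set) \<and> length xs = n}" by (auto simp: strings_def)
  thus ?thesis using card_lists_length_eq[of "UNIV::bool set" n] by simp
qed

lemma strings_Suc: "strings (Suc n) = (\<lambda>(xs,b). xs @ [b]) ` (strings n \<times> UNIV)"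
proof
  show "strings (Suc n) \<subseteq> (\<lambda>(xs,b). xs @ [b]) ` (strings n \<times> UNIV)"
  proof
    fix x assume "x \<in> strings (Suc n)"
    hence "length x = Suc n" by (simp add: strings_def)
    then obtain ys b where "x = ys @ [b]" by (metis length_Suc_conv_rev)
    thus "x \<in> (\<lambda>(xs,b). xs @ [b]) ` (strings n \<times> UNIV)"
      using \<open>length x = Suc n\<close> by (auto simp: strings_def image_iff)
  qed
qed (auto simp: strings_def)

lemma inj_snoc: "inj_on (\<lambda>(xs,b). xs @ [b]) A"
  by (auto simp: inj_on_def)

lemma prod_sum:
  fixes F :: "nat \<Rightarrow> bool \<Rightarrow> 'a::comm_semiring_1"
  shows "(\<Sum>x\<in>strings n. \<Prod>l<n. F l (x!l)) = (\<Prod>l<n. \<Sum>b\<in>UNIV. F l b)"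
proof (induction n)
  case 0
  have "strings 0 = {[]}" by (auto simp: strings_def)
  thus ?case by simp
next
  case (Suc n)
  have "(\<Sum>x\<in>strings (Suc n). \<Prod>l<Suc n. F l (x!l))
      = (\<Sum>p\<in>strings n \<times> UNIV. \<Prod>l<Suc n. F l ((fst p @ [snd p])!l))"
    unfolding strings_Suc by (subst sum.reindex[OF inj_snoc]) (simp add: case_prod_beta)
  also have "\<dots> = (\<Sum>p\<in>strings n \<times> UNIV. (\<Prod>l<n. F l (fst p!l)) * F n (snd p))"
  proof (rule sum.cong[OF refl])
    fix p assume "p \<in> strings n \<times> (UNIV::bool set)"
    hence len: "length (fst p) = n" by (auto simp: strings_def)
    have "(\<Prod>l<n. F l ((fst p @ [snd p])!l)) = (\<Prod>l<n. F l (fst p!l))"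
      by (rule prod.cong) (auto simp: nth_append len)
    thus "(\<Prod>l<Suc n. F l ((fst p @ [snd p])!l)) = (\<Prod>l<n. F l (fst p!l)) * F n (snd p)"
      by (simp add: len nth_append)
  qed
  also have "\<dots> = (\<Sum>x\<in>strings n. \<Sum>b\<in>UNIV. (\<Prod>l<n. F l (x!l)) * F n b)"
    by (simp add: sum.cartesian_product case_prod_beta)
  also have "\<dots> = (\<Sum>x\<in>strings n. (\<Prod>l<n. F l (x!l))) * (\<Sum>b\<in>UNIV. F n b)"
    by (rule sum_product[symmetric])
  finally show ?case using Suc by simp
qed


lemma complete2:
  assumes "orthonormal_basis2 e"
  shows "(\<Sum>b\<in>UNIV. e b p * cnj (e b q)) = (if p = q then 1 else 0)"
proof -
  define a where "a = e False False"
  define b where "b = e False True"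
  define c where "c = e True False"
  define d where "d = e True True"
  have UNIVb: "(UNIV::bool set) = {False, True}" by auto
  have o: "\<And>x y. (\<Sum>b\<in>UNIV. cnj (e x b) * e y b) = (if x = y then 1 else 0)"
    using assms by (simp add: orthonormal_basis2_def qinner_def)
  have h1: "cnj a*a + cnj b*b = 1" using o[of False False] by (simp add: UNIVb a_def b_def)
  have h2: "cnj c*c+cnj d*d = 1" using o[of True True] by (simp add: UNIVb c_def d_def)
  have h3: "cnj a*c+cnj b*d = 0" using o[of False True] by (simp add: UNIVb a_def b_def c_def d_def)
  have h4: "a*cnj c+b*cnj d = 0" using arg_cong[OF h3, of cnj] by simp
  have D: "(cnj a*cnj d-cnj c*cnj b)*(a*d-b*c) = 1"
    using h1 h2 h3 h4 by algebra
  hence Dnz: "a*d-b*c \<noteq> 0" by auto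
  have "(a*cnj a+c*cnj c - 1)*(a*d-b*c) = 0" "(a*cnj b+c*cnj d)*(a*d-b*c) = 0"
       "(b*cnj b+d*cnj d - 1)*(a*d-b*c) = 0"
    using h1 h2 h3 h4 by algebra+
  hence r1: "a*cnj a+c*cnj c = 1" and r2: "a*cnj b+c*cnj d = 0" and r3: "b*cnj b+d*cnj d = 1"
    using Dnz by auto
  have r4: "b*cnj a+d*cnj c = 0" using arg_cong[OF r2, of cnj] by (simp add: mult.commute)
  show ?thesis
    using r1 r2 r3 r4 by (cases p; cases q) (simp_all add: UNIVb a_def b_def c_def d_def)
qed

lemma prodvec_inner:
  assumes "length i = n" "length j = n"
  shows "(\<Sum>x\<in>strings n. cnj (prodvec e i x) * prodvec f j x) = (\<Prod>l<n. qinner (e (i!l)) (f (j!l)))"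
proof -
  have "(\<Sum>x\<in>strings n. cnj (prodvec e i x) * prodvec f j x)
      = (\<Sum>x\<in>strings n. \<Prod>l<n. cnj (e (i!l) (x!l)) * f (j!l) (x!l))"
    by (simp add: prodvec_def assms prod.distrib)
  also have "\<dots> = (\<Prod>l<n. \<Sum>b\<in>UNIV. cnj (e (i!l) b) * f (j!l) b)"
    by (rule prod_sum)
  finally show ?thesis by (simp add: qinner_def)
qed

lemma prod_delta:
  assumes "length i = n" "length j = n"
  shows "(\<Prod>l<n. (if i!l = j!l then 1 else 0::'a::comm_semiring_1)) = (if i = j then 1 else 0)"
proof (cases "i = j")
  case True thus ?thesis by simp
next
  case False
  then obtain l where "l < n" "i!l \<noteq> j!l" using assms by (metis nth_equalityI)
  thus ?thesis using False by (intro trans[OF prod_zero]) auto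
qed

lemma prodvec_ortho:
  assumes "orthonormal_basis2 e" "i \<in> strings n" "j \<in> strings n"
  shows "(\<Sum>x\<in>strings n. cnj (prodvec e i x) * prodvec e j x) = (if i = j then 1 else 0)"
proof -
  have len: "length i = n" "length j = n" using assms by (auto simp: strings_def)
  have "(\<Sum>x\<in>strings n. cnj (prodvec e i x) * prodvec e j x) = (\<Prod>l<n. qinner (e (i!l)) (e (j!l)))"
    by (rule prodvec_inner[OF len])
  also have "\<dots> = (\<Prod>l<n. (if i!l = j!l then 1 else 0))"
    using assms(1) by (simp add: orthonormal_basis2_def)
  finally show ?thesis using prod_delta[OF len] by simp
qed

lemma prodvec_complete:
  assumes "orthonormal_basis2 e" "x \<in> strings n" "y \<in> strings n"
  shows "(\<Sum>j\<in>strings n. prodvec e j x * cnj (prodvec e j y)) = (if x = y then 1 else 0)"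
proof -
  have len: "length x = n" "length y = n" using assms by (auto simp: strings_def)
  have "(\<Sum>j\<in>strings n. prodvec e j x * cnj (prodvec e j y))
      = (\<Sum>j\<in>strings n. \<Prod>l<n. e (j!l) (x!l) * cnj (e (j!l) (y!l)))"
    by (rule sum.cong[OF refl]) (simp add: prodvec_def strings_def prod.distrib)
  also have "\<dots> = (\<Prod>l<n. \<Sum>b\<in>UNIV. e b (x!l) * cnj (e b (y!l)))"
    by (rule prod_sum)
  also have "\<dots> = (\<Prod>l<n. (if x!l = y!l then 1 else 0))"
    using complete2[OF assms(1)] by simp
  finally show ?thesis using prod_delta[OF len] by simp
qed


lemma parseval:
  assumes "orthonormal_basis2 e"
  shows "(\<Sum>j\<in>strings n. (cmod (\<Sum>x\<in>strings n. cnj (prodvec e j x) * v x))\<^sup>2)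
       = (\<Sum>x\<in>strings n. (cmod (v x))\<^sup>2)"
proof -
  have "complex_of_real (\<Sum>j\<in>strings n. (cmod (\<Sum>x\<in>strings n. cnj (prodvec e j x) * v x))\<^sup>2)
     = (\<Sum>j\<in>strings n. (\<Sum>x\<in>strings n. cnj (prodvec e j x) * v x) * (\<Sum>y\<in>strings n. prodvec e j y * cnj (v y)))"
    unfolding of_real_sum complex_norm_square by simp
  also have "\<dots> = (\<Sum>j\<in>strings n. \<Sum>x\<in>strings n. \<Sum>y\<in>strings n. v x * cnj (v y) * (prodvec e j y * cnj (prodvec e j x)))"
    unfolding sum_product by (intro sum.cong refl) (simp add: mult_ac)
  also have "\<dots> = (\<Sum>x\<in>strings n. \<Sum>j\<in>strings n. \<Sum>y\<in>strings n. v x * cnj (v y) * (prodvec e j y * cnj (prodvec e j x)))"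
    by (rule sum.swap)
  also have "\<dots> = (\<Sum>x\<in>strings n. \<Sum>y\<in>strings n. \<Sum>j\<in>strings n. v x * cnj (v y) * (prodvec e j y * cnj (prodvec e j x)))"
    by (rule sum.cong[OF refl], rule sum.swap)
  also have "\<dots> = (\<Sum>x\<in>strings n. \<Sum>y\<in>strings n. v x * cnj (v y) * (\<Sum>j\<in>strings n. prodvec e j y * cnj (prodvec e j x)))"
    by (simp add: sum_distrib_left)
  also have "\<dots> = (\<Sum>x\<in>strings n. \<Sum>y\<in>strings n. v x * cnj (v y) * (if y = x then 1 else 0))"
    by (intro sum.cong refl) (simp add: prodvec_complete[OF assms])
  also have "\<dots> = (\<Sum>x\<in>strings n. v x * cnj (v x))"
    by (simp add: if_distrib[where f="\<lambda>t. _ * t"] sum.delta cong: if_cong)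
  also have "\<dots> = complex_of_real (\<Sum>x\<in>strings n. (cmod (v x))\<^sup>2)"
    unfolding of_real_sum complex_norm_square by simp
  finally show ?thesis using of_real_eq_iff by blast
qed



lemma expval_ptrace:
  fixes phi :: "bool list \<Rightarrow> 'c::finite \<Rightarrow> complex"
  shows "expval n (ptrace_C phi) v = complex_of_real (\<Sum>k\<in>UNIV. (cmod (\<Sum>x\<in>strings n. cnj (v x) * phi x k))\<^sup>2)"
proof -
  have "complex_of_real (\<Sum>k\<in>UNIV. (cmod (\<Sum>x\<in>strings n. cnj (v x) * phi x k))\<^sup>2)
     = (\<Sum>k\<in>UNIV. (\<Sum>x\<in>strings n. cnj (v x) * phi x k) * (\<Sum>y\<in>strings n. v y * cnj (phi y k)))"
    unfolding of_real_sum complex_norm_square by simp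
  also have "\<dots> = (\<Sum>k\<in>UNIV. \<Sum>x\<in>strings n. \<Sum>y\<in>strings n. cnj (v x) * (phi x k * cnj (phi y k)) * v y)"
    unfolding sum_product by (intro sum.cong refl) (simp add: mult_ac)
  also have "\<dots> = (\<Sum>x\<in>strings n. \<Sum>k\<in>UNIV. \<Sum>y\<in>strings n. cnj (v x) * (phi x k * cnj (phi y k)) * v y)"
    by (rule sum.swap)
  also have "\<dots> = (\<Sum>x\<in>strings n. \<Sum>y\<in>strings n. \<Sum>k\<in>UNIV. cnj (v x) * (phi x k * cnj (phi y k)) * v y)"
    by (rule sum.cong[OF refl], rule sum.swap)
  also have "\<dots> = expval n (ptrace_C phi) v"
    unfolding expval_def ptrace_C_def by (simp add: sum_distrib_left sum_distrib_right)
  finally show ?thesis by simp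
qed


lemma amp_expand:
  "(\<Sum>x\<in>strings n. cnj (v x) * phi_state mu J alpha C x k)
   = (\<Sum>i\<in>J. alpha i * (\<Sum>x\<in>strings n. cnj (v x) * prodvec mu i x) * C i k)"
proof -
  have "(\<Sum>x\<in>strings n. cnj (v x) * phi_state mu J alpha C x k)
      = (\<Sum>x\<in>strings n. \<Sum>i\<in>J. alpha i * C i k * (cnj (v x) * prodvec mu i x))"
    unfolding phi_state_def by (simp add: sum_distrib_left mult_ac)
  also have "\<dots> = (\<Sum>i\<in>J. \<Sum>x\<in>strings n. alpha i * C i k * (cnj (v x) * prodvec mu i x))"
    by (rule sum.swap)
  also have "\<dots> = (\<Sum>i\<in>J. alpha i * (\<Sum>x\<in>strings n. cnj (v x) * prodvec mu i x) * C i k)"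
    by (simp add: sum_distrib_left mult_ac)
  finally show ?thesis .
qed


lemma alpha_norm:
  fixes C :: "bool list \<Rightarrow> 'c::finite \<Rightarrow> complex"
  assumes ob: "orthonormal_basis2 mu" and J: "J \<subseteq> strings n"
    and Cn: "\<And>i. i \<in> J \<Longrightarrow> (\<Sum>k\<in>UNIV. (cmod (C i k))\<^sup>2) = 1"
    and tot: "(\<Sum>x\<in>strings n. \<Sum>k\<in>UNIV. (cmod (phi_state mu J alpha C x k))\<^sup>2) = 1"
  shows "(\<Sum>i\<in>J. (cmod (alpha i))\<^sup>2) = 1"
proof -
  have fJ: "finite J" by (rule finite_subset[OF J finite_strings])
  have inner: "(\<Sum>x\<in>strings n. phi_state mu J alpha C x k * cnj (phi_state mu J alpha C x k))
      = (\<Sum>i\<in>J. alpha i * cnj (alpha i) * (C i k * cnj (C i k)))" for k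
  proof -
    have "(\<Sum>x\<in>strings n. phi_state mu J alpha C x k * cnj (phi_state mu J alpha C x k))
       = (\<Sum>x\<in>strings n. \<Sum>i\<in>J. \<Sum>i'\<in>J. (alpha i * C i k * cnj (alpha i') * cnj (C i' k)) * (cnj (prodvec mu i' x) * prodvec mu i x))"
      unfolding phi_state_def cnj_sum sum_product
      by (rule sum.cong[OF refl], rule sum.cong[OF refl], rule sum.cong[OF refl]) (simp only: complex_cnj_mult mult_ac)
    also have "\<dots> = (\<Sum>i\<in>J. \<Sum>x\<in>strings n. \<Sum>i'\<in>J. (alpha i * C i k * cnj (alpha i') * cnj (C i' k)) * (cnj (prodvec mu i' x) * prodvec mu i x))"
      by (rule sum.swap)
    also have "\<dots> = (\<Sum>i\<in>J. \<Sum>i'\<in>J. \<Sum>x\<in>strings n. (alpha i * C i k * cnj (alpha i') * cnj (C i' k)) * (cnj (prodvec mu i' x) * prodvec mu i x))"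
      by (rule sum.cong[OF refl], rule sum.swap)
    also have "\<dots> = (\<Sum>i\<in>J. \<Sum>i'\<in>J. (alpha i * C i k * cnj (alpha i') * cnj (C i' k)) * (if i' = i then 1 else 0))"
    proof (intro sum.cong refl)
      fix i i' assume "i \<in> J" "i' \<in> J"
      hence "(\<Sum>x\<in>strings n. cnj (prodvec mu i' x) * prodvec mu i x) = (if i' = i then 1 else 0)"
        using prodvec_ortho[OF ob] J by blast
      thus "(\<Sum>x\<in>strings n. (alpha i * C i k * cnj (alpha i') * cnj (C i' k)) * (cnj (prodvec mu i' x) * prodvec mu i x))
          = (alpha i * C i k * cnj (alpha i') * cnj (C i' k)) * (if i' = i then 1 else 0)"
        by (simp add: sum_distrib_left[symmetric])
    qed
    also have "\<dots> = (\<Sum>i\<in>J. alpha i * cnj (alpha i) * (C i k * cnj (C i k)))"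
      by (simp add: if_distrib[where f="\<lambda>t. _ * t"] sum.delta[OF fJ] mult_ac cong: if_cong)
    finally show ?thesis .
  qed
  have "complex_of_real 1 = (\<Sum>k\<in>UNIV. \<Sum>x\<in>strings n. phi_state mu J alpha C x k * cnj (phi_state mu J alpha C x k))"
    unfolding tot[symmetric] of_real_sum complex_norm_square by (rule sum.swap)
  also have "\<dots> = (\<Sum>k\<in>UNIV. \<Sum>i\<in>J. alpha i * cnj (alpha i) * (C i k * cnj (C i k)))"
    using inner by simp
  also have "\<dots> = (\<Sum>i\<in>J. alpha i * cnj (alpha i) * (\<Sum>k\<in>UNIV. C i k * cnj (C i k)))"
    by (subst sum.swap) (simp add: sum_distrib_left)
  also have "\<dots> = (\<Sum>i\<in>J. alpha i * cnj (alpha i))"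
  proof (intro sum.cong refl)
    fix i assume "i \<in> J"
    have "(\<Sum>k\<in>UNIV. C i k * cnj (C i k)) = complex_of_real (\<Sum>k\<in>UNIV. (cmod (C i k))\<^sup>2)"
      unfolding of_real_sum complex_norm_square by (rule refl)
    thus "alpha i * cnj (alpha i) * (\<Sum>k\<in>UNIV. C i k * cnj (C i k)) = alpha i * cnj (alpha i)"
      using Cn[OF \<open>i \<in> J\<close>] by simp
  qed
  also have "\<dots> = complex_of_real (\<Sum>i\<in>J. (cmod (alpha i))\<^sup>2)"
    unfolding of_real_sum complex_norm_square by (rule refl)
  finally show ?thesis using of_real_eq_iff by (metis of_real_1)
qed



lemma overlap_facts:
  shows "\<And>x y. (cmod (qinner (mu x) (nu y)))\<^sup>2 \<le> overlap_c mu nu" and "0 \<le> overlap_c mu nu"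
proof -
  have eq: "{(cmod (qinner (mu x) (nu y)))\<^sup>2 | x y. True} = (\<lambda>p. (cmod (qinner (mu (fst p)) (nu (snd p))))\<^sup>2) ` UNIV"
    by (auto simp: image_iff) (metis fst_conv snd_conv)
  have fin: "finite {(cmod (qinner (mu x) (nu y)))\<^sup>2 | x y. True}" unfolding eq by simp
  show le: "\<And>x y. (cmod (qinner (mu x) (nu y)))\<^sup>2 \<le> overlap_c mu nu"
    unfolding overlap_c_def by (rule Max_ge[OF fin]) blast
  show "0 \<le> overlap_c mu nu" using le[of True True] by (meson order_trans zero_le_power2)
qed

lemma qinner_swap: "qinner v u = cnj (qinner u v)"
  by (simp add: qinner_def mult.commute)

lemma beta_bound:
  assumes "i \<in> strings n" "j \<in> strings n"
  shows "(cmod (\<Sum>x\<in>strings n. cnj (prodvec nu j x) * prodvec mu i x))\<^sup>2 \<le> overlap_c mu nu ^ n"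
proof -
  have len: "length j = n" "length i = n" using assms by (auto simp: strings_def)
  have "(cmod (\<Sum>x\<in>strings n. cnj (prodvec nu j x) * prodvec mu i x))\<^sup>2
      = (\<Prod>l<n. (cmod (qinner (nu (j!l)) (mu (i!l))))\<^sup>2)"
    unfolding prodvec_inner[OF len] by (simp add: prod_norm[symmetric] prod_power_distrib)
  also have "\<dots> \<le> (\<Prod>l<n. overlap_c mu nu)"
  proof (rule prod_mono)
    fix l
    have "(cmod (qinner (nu (j!l)) (mu (i!l))))\<^sup>2 = (cmod (qinner (mu (i!l)) (nu (j!l))))\<^sup>2"
      by (subst qinner_swap) simp
    thus "0 \<le> (cmod (qinner (nu (j!l)) (mu (i!l))))\<^sup>2 \<and> (cmod (qinner (nu (j!l)) (mu (i!l))))\<^sup>2 \<le> overlap_c mu nu"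
      using overlap_facts(1) by simp
  qed
  finally show ?thesis by simp
qed

lemma value_bound:
  fixes C :: "bool list \<Rightarrow> 'c::finite \<Rightarrow> complex"
  assumes ob: "orthonormal_basis2 mu" and J: "J \<subseteq> strings n" and j: "j \<in> strings n"
    and Cn: "\<And>i. i \<in> J \<Longrightarrow> (\<Sum>k\<in>UNIV. (cmod (C i k))\<^sup>2) = 1"
    and tot: "(\<Sum>x\<in>strings n. \<Sum>k\<in>UNIV. (cmod (phi_state mu J alpha C x k))\<^sup>2) = 1"
  shows "Re (expval n (ptrace_C (phi_state mu J alpha C)) (prodvec nu j)) \<le> real (card J) * overlap_c mu nu ^ n"
proof -
  define b where "b i = (\<Sum>x\<in>strings n. cnj (prodvec nu j x) * prodvec mu i x)" for i
  have an: "(\<Sum>i\<in>J. (cmod (alpha i))\<^sup>2) = 1" by (rule alpha_norm[OF ob J Cn tot])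
  have bb: "(cmod (b i))\<^sup>2 \<le> overlap_c mu nu ^ n" if "i \<in> J" for i
    unfolding b_def using beta_bound that J j by blast
  have "Re (expval n (ptrace_C (phi_state mu J alpha C)) (prodvec nu j))
      = (\<Sum>k\<in>UNIV. (cmod (\<Sum>i\<in>J. alpha i * b i * C i k))\<^sup>2)"
    unfolding expval_ptrace amp_expand b_def by simp
  also have "\<dots> \<le> (\<Sum>k\<in>UNIV. \<Sum>i\<in>J. (cmod (b i))\<^sup>2 * (cmod (C i k))\<^sup>2)"
  proof (rule sum_mono)
    fix k :: 'c
    have "cmod (\<Sum>i\<in>J. alpha i * b i * C i k) \<le> (\<Sum>i\<in>J. cmod (alpha i) * (cmod (b i) * cmod (C i k)))"
      by (rule order_trans[OF norm_sum]) (simp add: norm_mult mult.assoc)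
    hence "(cmod (\<Sum>i\<in>J. alpha i * b i * C i k))\<^sup>2 \<le> (\<Sum>i\<in>J. cmod (alpha i) * (cmod (b i) * cmod (C i k)))\<^sup>2"
      by (simp add: power_mono)
    also have "\<dots> \<le> (\<Sum>i\<in>J. (cmod (alpha i))\<^sup>2) * (\<Sum>i\<in>J. (cmod (b i) * cmod (C i k))\<^sup>2)"
      by (rule Cauchy_Schwarz_ineq_sum)
    finally show "(cmod (\<Sum>i\<in>J. alpha i * b i * C i k))\<^sup>2 \<le> (\<Sum>i\<in>J. (cmod (b i))\<^sup>2 * (cmod (C i k))\<^sup>2)"
      by (simp add: an power_mult_distrib)
  qed
  also have "\<dots> = (\<Sum>i\<in>J. (cmod (b i))\<^sup>2 * (\<Sum>k\<in>UNIV. (cmod (C i k))\<^sup>2))"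
    by (simp only: sum.swap[of _ UNIV J] sum_distrib_left)
  also have "\<dots> = (\<Sum>i\<in>J. (cmod (b i))\<^sup>2)"
    using Cn by simp
  also have "\<dots> \<le> (\<Sum>i\<in>J. overlap_c mu nu ^ n)"
    by (rule sum_mono) (rule bb)
  also have "\<dots> = real (card J) * overlap_c mu nu ^ n" by simp
  finally show ?thesis .
qed

lemma value_sum:
  fixes C :: "bool list \<Rightarrow> 'c::finite \<Rightarrow> complex"
  assumes onu: "orthonormal_basis2 nu"
    and tot: "(\<Sum>x\<in>strings n. \<Sum>k\<in>UNIV. (cmod (phi_state mu J alpha C x k))\<^sup>2) = 1"
  shows "(\<Sum>j\<in>strings n. Re (expval n (ptrace_C (phi_state mu J alpha C)) (prodvec nu j))) = 1"
proof -
  have "(\<Sum>j\<in>strings n. Re (expval n (ptrace_C (phi_state mu J alpha C)) (prodvec nu j)))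
      = (\<Sum>j\<in>strings n. \<Sum>k\<in>UNIV. (cmod (\<Sum>x\<in>strings n. cnj (prodvec nu j x) * phi_state mu J alpha C x k))\<^sup>2)"
    unfolding expval_ptrace by simp
  also have "\<dots> = (\<Sum>k\<in>UNIV. \<Sum>j\<in>strings n. (cmod (\<Sum>x\<in>strings n. cnj (prodvec nu j x) * phi_state mu J alpha C x k))\<^sup>2)"
    by (rule sum.swap)
  also have "\<dots> = (\<Sum>k\<in>UNIV. \<Sum>x\<in>strings n. (cmod (phi_state mu J alpha C x k))\<^sup>2)"
    by (simp only: parseval[OF onu])
  also have "\<dots> = 1" using tot by (simp only: sum.swap[of _ UNIV "strings n"])
  finally show ?thesis .
qed



lemma weight_prod:
  fixes p :: real and a :: bool
  assumes i: "i \<in> strings n"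
  defines "S \<equiv> {l. l < n \<and> i!l \<noteq> a}"
  shows "(\<Prod>l<n. (if i!l = a then 1 - p else p)) = p ^ card S * (1 - p) ^ (n - card S)"
proof -
  have Ss: "S \<subseteq> {..<n}" unfolding S_def by auto
  have "(\<Prod>l<n. (if i!l = a then 1 - p else p))
      = (\<Prod>l\<in>{..<n} - S. (if i!l = a then 1 - p else p)) * (\<Prod>l\<in>S. (if i!l = a then 1 - p else p))"
    by (rule prod.subset_diff[OF Ss]) simp
  also have "(\<Prod>l\<in>{..<n} - S. (if i!l = a then 1 - p else p)) = (\<Prod>l\<in>{..<n} - S. 1 - p)"
    by (rule prod.cong) (auto simp: S_def)
  also have "(\<Prod>l\<in>S. (if i!l = a then 1 - p else p)) = (\<Prod>l\<in>S. p)"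
    by (rule prod.cong) (auto simp: S_def)
  finally show ?thesis using Ss by (simp add: card_Diff_subset finite_subset mult.commute)
qed

lemma count_bound:
  fixes p :: real
  assumes J: "J \<subseteq> {i\<in>strings n. hamming_weight_rel a i \<le> p}" and p0: "0 < p"
  shows "real (card J) \<le> 2 powr (real n * Hbar p)"
proof (cases "p > 1/2")
  case True
  have "card J \<le> card (strings n)" using J by (intro card_mono) auto
  hence "real (card J) \<le> 2 ^ n" by (simp add: card_strings)
  thus ?thesis using True by (simp add: Hbar_def powr_realpow)
next
  case False
  hence p2: "p \<le> 1/2" by simp
  define q where "q b = (if b = a then 1 - p else p)" for b
  define H where "H = - p * log 2 p - (1 - p) * log 2 (1 - p)"
  have Hb: "Hbar p = H" using p0 p2 by (simp add: Hbar_def H_def)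
  have q0: "\<And>b. 0 \<le> q b" using p2 p0 by (simp add: q_def)
  have fJ: "finite J" by (rule finite_subset[OF _ finite_strings]) (use J in auto)
  have sum1: "(\<Sum>i\<in>strings n. \<Prod>l<n. q (i!l)) = 1"
  proof -
    have "(\<Sum>i\<in>strings n. \<Prod>l<n. q (i!l)) = (\<Prod>l<n. \<Sum>b\<in>UNIV. q b)" by (rule prod_sum)
    also have "(\<Sum>b\<in>UNIV. q b) = 1"
    proof -
      have U: "(UNIV::bool set) = {a, \<not> a}" by auto
      show ?thesis unfolding U q_def by simp
    qed
    finally show ?thesis by simp
  qed
  have lb: "2 powr (- (real n * H)) \<le> (\<Prod>l<n. q (i!l))" if iJ: "i \<in> J" for i
  proof -
    have istr: "i \<in> strings n" and hw: "hamming_weight_rel a i \<le> p" using J iJ by auto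
    define S where "S = {l. l < n \<and> i!l \<noteq> a}"
    define k where "k = card S"
    have len: "length i = n" using istr by (simp add: strings_def)
    have kn: "k \<le> n" unfolding k_def S_def
      using card_mono[of "{..<n}" "{l. l < n \<and> i!l \<noteq> a}"] by auto
    have kp: "real k \<le> p * real n"
    proof (cases "n = 0")
      case True thus ?thesis using kn by simp
    next
      case False
      have "real k / real n \<le> p" using hw len by (simp add: hamming_weight_rel_def k_def S_def)
      thus ?thesis using False by (simp add: divide_le_eq mult.commute)
    qed
    have P: "(\<Prod>l<n. q (i!l)) = p ^ k * (1 - p) ^ (n - k)"
      unfolding q_def k_def S_def by (rule weight_prod[OF istr])
    have p1: "0 < 1 - p" using p2 by simp
    have lg: "log 2 (p ^ k * (1 - p) ^ (n - k)) = real k * log 2 p + (real n - real k) * log 2 (1 - p)"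
      using p0 p1 kn by (simp add: log_mult log_nat_power of_nat_diff)
    have lpq: "log 2 p \<le> log 2 (1 - p)" using p0 p2 by simp
    have "- (real n * H) = real n * p * log 2 p + real n * (1 - p) * log 2 (1 - p)"
      by (simp add: H_def algebra_simps)
    also have "\<dots> \<le> real k * log 2 p + (real n - real k) * log 2 (1 - p)"
    proof -
      have "(p * real n - real k) * (log 2 (1 - p) - log 2 p) \<ge> 0"
        using kp lpq by (intro mult_nonneg_nonneg) auto
      thus ?thesis by (simp add: algebra_simps)
    qed
    finally have "- (real n * H) \<le> log 2 (p ^ k * (1 - p) ^ (n - k))" using lg by simp
    hence "2 powr (- (real n * H)) \<le> p ^ k * (1 - p) ^ (n - k)"
      using p0 p1 by (subst (asm) le_log_iff) auto
    thus ?thesis using P by simp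
  qed
  have "real (card J) * 2 powr (- (real n * H)) = (\<Sum>i\<in>J. 2 powr (- (real n * H)))" by simp
  also have "\<dots> \<le> (\<Sum>i\<in>J. \<Prod>l<n. q (i!l))" by (rule sum_mono) (rule lb)
  also have "\<dots> \<le> (\<Sum>i\<in>strings n. \<Prod>l<n. q (i!l))"
    by (rule sum_mono2) (use J q0 in \<open>auto intro: prod_nonneg\<close>)
  also have "\<dots> = 1" by (rule sum1)
  finally have "real (card J) * 2 powr (- (real n * H)) \<le> 1" .
  hence "real (card J) \<le> 1 / 2 powr (- (real n * H))" by (simp add: le_divide_eq)
  also have "\<dots> = 2 powr (real n * H)" by (simp add: powr_minus divide_inverse)
  finally show ?thesis by (simp add: Hb)
qed



theorem mainTheorem2:
  fixes mu nu :: "bool \<Rightarrow> qubit"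
    and n :: nat and a :: bool and w \<delta> :: real
    and J :: "bool list set"
    and alpha :: "bool list \<Rightarrow> complex"
    and C :: "bool list \<Rightarrow> 'c::finite \<Rightarrow> complex"
  assumes "orthonormal_basis2 mu" and "orthonormal_basis2 nu"
    and "0 \<le> w" and "w \<le> 1" and "\<delta> > 0"
    and "J \<subseteq> {i\<in>strings n. hamming_weight_rel a i \<le> w + \<delta>}"
    and "\<And>i. i \<in> J \<Longrightarrow> (\<Sum>k\<in>UNIV. (cmod (C i k))\<^sup>2) = 1"
    and "(\<Sum>x\<in>strings n. \<Sum>k\<in>UNIV. (cmod (phi_state mu J alpha C x k))\<^sup>2) = 1"
  shows "Hmin_meas n nu (ptrace_C (phi_state mu J alpha C))
           \<ge> - real n * log 2 (overlap_c mu nu) - real n * Hbar (w + \<delta>)"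
proof -
  note ob = assms(1) and onu = assms(2) and Jh = assms(6) and Cn = assms(7) and tot = assms(8)
  define f where "f j = Re (expval n (ptrace_C (phi_state mu J alpha C)) (prodvec nu j))" for j
  define M where "M = Max (f ` strings n)"
  define c where "c = overlap_c mu nu"
  have JS: "J \<subseteq> strings n" using Jh by auto
  have ne: "strings n \<noteq> {}" using length_replicate[of n False] unfolding strings_def by blast
  have fb: "f j \<le> real (card J) * c ^ n" if "j \<in> strings n" for j
    unfolding f_def c_def by (rule value_bound[OF ob JS that Cn tot])
  have Mle: "M \<le> real (card J) * c ^ n" unfolding M_def using fb ne by (simp add: Max_le_iff)
  have Mpos: "0 < M"
  proof (rule ccontr)
    assume "\<not> 0 < M"
    hence "\<forall>j\<in>strings n. f j \<le> 0" unfolding M_def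
      by (metis Max_ge finite_imageI finite_strings imageI not_less order_trans)
    hence "(\<Sum>j\<in>strings n. f j) \<le> 0" by (simp add: sum_nonpos)
    moreover have "(\<Sum>j\<in>strings n. f j) = 1" unfolding f_def by (rule value_sum[OF onu tot])
    ultimately show False by simp
  qed
  have cJ: "real (card J) \<le> 2 powr (real n * Hbar (w + \<delta>))"
    by (rule count_bound[OF Jh]) (use assms(3,5) in simp)
  have c0: "0 \<le> c" unfolding c_def by (rule overlap_facts(2))
  have cn0: "0 < c ^ n"
  proof -
    have "0 < real (card J) * c ^ n" using Mpos Mle by linarith
    thus ?thesis using c0 by (simp add: zero_less_mult_iff)
  qed
  have "M \<le> c ^ n * 2 powr (real n * Hbar (w + \<delta>))"
    using Mle cJ cn0 by (smt (verit) mult.commute mult_right_mono)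
  hence "log 2 M \<le> log 2 (c ^ n * 2 powr (real n * Hbar (w + \<delta>)))"
    using Mpos by simp
  also have "\<dots> = real n * log 2 c + real n * Hbar (w + \<delta>)"
    using cn0 c0 by (cases "n = 0") (auto simp: log_mult log_nat_power zero_power)
  finally have "log 2 M \<le> real n * log 2 c + real n * Hbar (w + \<delta>)" .
  moreover have "Hmin_meas n nu (ptrace_C (phi_state mu J alpha C)) = - log 2 M"
    unfolding Hmin_meas_def M_def f_def ..
  ultimately show ?thesis unfolding c_def by linarith
qed


end
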